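(* For $n\ge 0$, $$(\mathfrak C_0+\mathfrak C_2)^n=(2n)!\sum_{l=0}^{n+1}\frac{(-1)^{n-l-1}(2l-1)(3n^2-3nl+2l^2+4n-3l+1)(2n-2l-1)!!}{3\cdot 2^{n-l}(n-l+1)!\,(2l)!}\mathfrak C_{2l}.$$
   Context: The numbers $\mathfrak C_{2n}$ (Cauchy numbers with level $2$) are defined by $\frac{t}{{\rm arcsinh}\,t}=\sum_{n=0}^\infty\mathfrak C_{2n}\frac{t^{2n}}{(2n)!}$. Convolution notation: $(\mathfrak C_{2j_1}+\cdots+\mathfrak C_{2j_k})^n:=\sum_{i_1+\cdots+i_k=n,\ i_1,\dots,i_k\ge0}\frac{(2n)!}{(2i_1)!\cdots(2i_k)!}\mathfrak C_{2i_1+2j_1}\cdots\mathfrak C_{2i_k+2j_k}$. Double factorials: $(2i-1)!!=(2i-1)(2i-3)\cdots1$ for $i\ge1$, $(-1)!!=1$, and $(-(2i+1))!!=\frac{(-1)^i}{(2i-1)!!}$ for $i\ge1$. *)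

theory Defs
  imports "HOL-Analysis.Analysis"
begin

definition t_over_arsinh :: "real \<Rightarrow> real" where
  "t_over_arsinh t = (if t = 0 then 1 else t / arsinh t)"

text \<open>Cauchy numbers with level 2: cauchyC2 n is the number C_{2n}, i.e. the
  (2n)-th Taylor coefficient times (2n)! of t / arcsinh t at 0,
  i.e. its (2n)-th derivative at 0.\<close>
definition cauchyC2 :: "nat \<Rightarrow> real" where
  "cauchyC2 n = (deriv ^^ (2 * n)) t_over_arsinh 0"

definition oddprod :: "nat \<Rightarrow> real" where
  "oddprod k = (\<Prod>i=1..k. 2 * real i - 1)"

text \<open>Double factorial of an odd integer m, with (-1)!! = 1 and
  (-(2i+1))!! = (-1)^i / (2i-1)!!.\<close>
definition dfact :: "int \<Rightarrow> real" where
  "dfact m = (if m \<ge> -1 then oddprod (nat ((m + 1) div 2))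
              else (-1) ^ nat ((- m - 1) div 2) / oddprod (nat ((- m - 1) div 2)))"

end

theory Submission
  imports Defs
begin

unbundle no vec_syntax
unbundle fps_syntax


definition Sp :: "real \<Rightarrow> real fps" where
  "Sp a = Abs_fps (\<lambda>m. if even m then a gchoose (m div 2) else 0)"

definition Kf :: "real fps" where
  "Kf = Abs_fps (\<lambda>m. if even m then ((-1/2) gchoose (m div 2)) / of_nat (m+1) else 0)"

lemma sum_even_reduce:
  fixes h :: "nat \<Rightarrow> 'a::comm_monoid_add"
  assumes "\<And>i. odd i \<Longrightarrow> h i = 0"
  shows "(\<Sum>i=0..2*n. h i) = (\<Sum>i=0..n. h (2*i))"
proof (induction n)
  case 0 then show ?case by simp
next
  case (Suc n)
  have e: "2 * Suc n = Suc (Suc (2*n))" by simp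
  have "(\<Sum>i=0..2*Suc n. h i) = (\<Sum>i=0..2*n. h i) + h (Suc (2*n)) + h (2 * Suc n)"
    unfolding e by (simp add: add.assoc)
  also have "h (Suc (2*n)) = 0" using assms by simp
  finally show ?case using Suc by simp
qed

lemma Sp_nth: "Sp a $ m = (if even m then a gchoose (m div 2) else 0)"
  by (simp add: Sp_def)

lemma Sp_mult: "Sp a * Sp b = Sp (a + b)"
proof (rule fps_ext)
  fix m
  show "(Sp a * Sp b) $ m = Sp (a + b) $ m"
  proof (cases "even m")
    case True
    then obtain n where m: "m = 2*n" by auto
    have "(Sp a * Sp b) $ m = (\<Sum>i=0..2*n. Sp a $ i * Sp b $ (2*n - i))"
      by (simp add: fps_mult_nth m)
    also have "\<dots> = (\<Sum>i=0..n. Sp a $ (2*i) * Sp b $ (2*n - 2*i))"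
      by (rule sum_even_reduce) (simp add: Sp_nth)
    also have "\<dots> = (\<Sum>i=0..n. (a gchoose i) * (b gchoose (n - i)))"
    proof (rule sum.cong)
      fix i assume "i \<in> {0..n}"
      then have "2*n - 2*i = 2*(n-i)" by auto
      then show "Sp a $ (2*i) * Sp b $ (2*n - 2*i) = (a gchoose i) * (b gchoose (n - i))"
        by (simp add: Sp_nth)
    qed simp
    also have "\<dots> = (a + b) gchoose n" by (rule gbinomial_Vandermonde)
    finally show ?thesis by (simp add: Sp_nth m)
  next
    case False
    have "(Sp a * Sp b) $ m = (\<Sum>i=0..m. Sp a $ i * Sp b $ (m - i))"
      by (simp add: fps_mult_nth)
    also have "\<dots> = 0"
    proof (rule sum.neutral, rule ballI)
      fix i assume "i \<in> {0..m}"
      then have "odd i \<or> odd (m - i)" using False by auto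
      then show "Sp a $ i * Sp b $ (m - i) = 0" by (auto simp: Sp_nth)
    qed
    finally show ?thesis using False by (simp add: Sp_nth)
  qed
qed

lemma Sp_0: "Sp 0 = 1"
  by (rule fps_ext) (auto simp: Sp_nth gbinomial_0_left)

lemma Sp_1: "Sp 1 = 1 + fps_X^2"
proof (rule fps_ext)
  fix m
  have g: "(1::real) gchoose k = (if k \<le> 1 then 1 else 0)" for k
  proof (cases "k \<le> 1")
    case True then have "k = 0 \<or> k = 1" by auto
    then show ?thesis by auto
  next
    case False then show ?thesis
      using binomial_gbinomial[of 1 k, where 'a=real] by (auto simp: binomial_eq_0)
  qed
  show "Sp 1 $ m = (1 + fps_X^2 :: real fps) $ m"
    by (auto simp: Sp_nth fps_X_power_nth g elim!: evenE)
qed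

lemma Kf_rel: "Kf + fps_X * fps_deriv Kf = Sp (-1/2)"
proof (rule fps_ext)
  fix m
  have "(Kf + fps_X * fps_deriv Kf) $ m = (of_nat m + 1) * Kf $ m"
    by (cases m) (simp_all add: algebra_simps)
  also have "\<dots> = Sp (-1/2) $ m"
    by (simp add: Kf_def Sp_nth add.commute)
  finally show "(Kf + fps_X * fps_deriv Kf) $ m = Sp (-1/2) $ m" .
qed

lemma alg_identity:
  fixes F Fa Fb Fc K Ka Kb Kc S Sa Sb Q X :: "'a::idom"
  assumes g1: "(S*S - 1 - X^2) = 0"
  and g2: "(S*Sa - X) = 0"
  and g3: "(Sa*Sa + S*Sb - 1) = 0"
  and g4: "(S*(K + X*Ka) - 1) = 0"
  and g5: "(Sa*(K + X*Ka) + S*(2*Ka + X*Kb)) = 0"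
  and g6: "(Sb*(K + X*Ka) + 2*Sa*(2*Ka + X*Kb) + S*(3*Kb + X*Kc)) = 0"
  and g7: "(F*K - 1) = 0"
  and g8: "(Fa*K + F*Ka) = 0"
  and g9: "(Fb*K + 2*Fa*Ka + F*Kb) = 0"
  and g10: "(Fc*K + 3*Fb*Ka + 3*Fa*Kb + F*Kc) = 0"
  and gq: "(S*Q - 1) = 0"
  shows "6*X^2*F*Fb = - (3*(X*Sa + X^2*Sb)*(X*Fa - F) + X*Sa*(3*X^2*Fb - 4*X*Fa + 4*F) + 2*S*X^3*Fc)"
proof -
  have "6*X^2*F*Fb - (- (3*(X*Sa + X^2*Sb)*(X*Fa - F) + X*Sa*(3*X^2*Fb - 4*X*Fa + 4*F) + 2*S*X^3*Fc)) =
    (2*F*Q + 3*F*Q^3 - 3*F*Q^3*X^2 - 3*F*S^2*Q^3 - 4*F^2*Q^2 + 6*F^2*Q^4 - 6*F^2*Q^4*X^2 + 4*F^2*S*Q^3 - 6*F^2*S*Q^5 + 6*F^2*S*Q^5*X^2 - 6*F^2*S^2*Q^4 + 6*F^2*S^3*Q^5 + 4*F^2*K*Q - 3*F^2*K*Q^3 + 3*F^2*K*Q^3*X^2 + 3*F^2*K*S^2*Q^3 - 12*F^3*Q^3 + 12*F^3*S*Q^4 + 12*F^3*K*Q^2 - 12*F^3*K*S*Q^3 - 6*F^3*K^2*Q) * (S*S - 1 - X^2) + (F*Q*X + 3*F*Q^3*X^3 + 3*F*Sa*Q^2*X^2 - 3*F^2*Kb*Q*X^3 + 4*F^2*Kb*S*Q^2*X^3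 + F^2*Ka*Q*X^2 + 6*F^2*Ka*Q^3*X^4 + 3*F^2*Ka*Sa*Q^2*X^3 + 2*F^2*Ka*S*Q^2*X^2 - 6*F^2*Ka*S*Q^4*X^4 - 2*F^2*Ka*S*Sa*Q^3*X^3 + 3*F^2*K*Q^3*X^3 - 6*F^2*K*S*Q^2*X - 6*F^2*K*S*Q^4*X^3 - 2*F^2*K*S*Sa*Q^3*X^2 + 6*F^3*Ka*Q^2*X^2 + 6*F^3*Ka^2*Q*X^3 - 12*F^3*Ka^2*S*Q^2*X^3 + 6*F^3*K*Q^2*X - 12*F^3*K*Ka*S*Q^2*X^2) * (S*Sa - X) + (0 - 3*F*Q*X^2 - 3*F^2*Ka*Q*X^3 + 2*F^2*Ka*S*Q^2*X^3 + 2*F^2*K*S*Q^2*X^2) * (Sa*Sa + S*Sb - 1) + (4*F^2*Q^2*X^2 + 6*F^2*Q^4*X^4 - 12*F^2*S*Q - 4*F^2*S*Q^3*X^2 - 6*F^2*S*Q^5*X^4 + 12*F^3*Q + 12*F^3*Q^3*X^2 - 24*F^3*S*Q^2 - 12*F^3*S*Q^4*X^2 + 6*F^3*Ka*Q^2*X^3 - 24*F^3*Ka*S*Q*X - 12*F^3*Ka*S*Q^3*X^3 - 6*F^3*K*Q^2*X^2 + 24*F^3*K*S*Q + 12*F^4*Q^2 - 12*F^4*S*Q^3 + 12*F^4*Ka*Q*X - 12*F^4*Ka*S*Q^2*X - 12*F^4*Ka^2*S*Q*X^2 - 12*F^4*K*Q + 24*F^4*K*S*Q^2 + 12*F^4*K*Ka*S*Q*X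 - 12*F^4*K^2*S*Q) * (S*(K + X*Ka) - 1) + (0 - 3*F^2*Q^2*X^3 + 6*F^2*S*Q*X + 4*F^2*S*Q^3*X^3 - 6*F^3*Q*X + 12*F^3*Ka*S*Q*X^2) * (Sa*(K + X*Ka) + S*(2*Ka + X*Kb)) + (0 - 2*F^2*S*Q*X^2) * (Sb*(K + X*Ka) + 2*Sa*(2*Ka + X*Kb) + S*(3*Kb + X*Kc)) + (0 - 2*Fc*S*X^3 - 3*Fb*Sa*X^3 - 3*Fa*Sb*X^3 + Fa*Sa*X^2 - 2*F*Q - 3*F*Q^3 + 2*F*S^2*Q + 6*F*S^2*Q^3 - 3*F*S^4*Q^3 - 6*F*Fb*X^2 + 6*F*Fb*Ka*S*X^3 + 6*F*Fa*Kb*S*X^3 + 6*F*Fa*Ka*Sa*X^3 + 12*F^2*Q^2 + 12*F^2*S*Q - 12*F^2*S*Q^3 - 12*F^2*S^2*Q^2 + 12*F^2*S^3*Q^3 - 6*F^2*K*Q - 12*F^2*K*S + 6*F^2*K*S^2*Q + 12*F^2*Fa*Ka*X^2 - 12*F^2*Fa*Ka^2*S*X^3 - 24*F^3*Q + 36*F^3*S*Q^2 + 12*F^3*K - 36*F^3*K*S*Q + 12*F^3*K^2*S) * (F*K - 1) + (3*F*Sb*X^3 - F*Sa*X^2 - 6*F^2*Kb*S*X^3 - 6*F^2*Ka*Sa*X^3 - 12*F^3*Ka*X^2 + 12*F^3*Ka^2*S*X^3) * (Fa*K + F*Ka) + (3*F*Sa*X^3 + 6*F^2*X^2 - 6*F^2*Ka*S*X^3)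 * (Fb*K + 2*Fa*Ka + F*Kb) + (2*F*S*X^3) * (Fc*K + 3*Fb*Ka + 3*Fa*Kb + F*Kc) + (3*F*Sb*X^2 - F*Sa*X - 3*F*Sa*Q^2*X^3 - 3*F*Sa^2*Q*X^2 - 8*F^2*Q^2 - 6*F^2*Q^4 + 8*F^2*S^2*Q^2 + 12*F^2*S^2*Q^4 - 6*F^2*S^4*Q^4 + 2*F^2*Kc*S*X^3 + 3*F^2*Kb*Q*X^4 + 3*F^2*Kb*Sa*X^3 - 4*F^2*Kb*S*Q^2*X^4 - 4*F^2*Kb*S*Sa*Q*X^3 + 2*F^2*Ka*Q*X^3 - 6*F^2*Ka*Q^3*X^5 + 3*F^2*Ka*Sb*X^3 - F^2*Ka*Sa*X^2 - 6*F^2*Ka*Sa*Q^2*X^4 - 3*F^2*Ka*Sa^2*Q*X^3 - 4*F^2*Ka*S*Q^2*X^3 + 6*F^2*Ka*S*Q^4*X^5 - 2*F^2*Ka*S*Sb*Q*X^3 - 2*F^2*Ka*S*Sa*Q*X^2 + 6*F^2*Ka*S*Sa*Q^3*X^4 + 2*F^2*Ka*S*Sa^2*Q^2*X^3 - 4*F^2*K*Q*X^2 - 6*F^2*K*Q^3*X^4 - 3*F^2*K*Sa*Q^2*X^3 + 12*F^2*K*S + 4*F^2*K*S*Q^2*X^2 + 6*F^2*K*S*Q^4*X^4 - 2*F^2*K*S*Sb*Q*X^2 + 6*F^2*K*S*Sa*Q*X + 6*F^2*K*S*Sa*Q^3*X^3 + 2*F^2*K*S*Sa^2*Q^2*X^2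 + 12*F^3*Q + 12*F^3*Q^3 - 12*F^3*S^2*Q^3 + 6*F^3*Kb*X^2 - 12*F^3*Ka*Q^2*X^3 - 6*F^3*Ka*Sa*Q*X^2 + 24*F^3*Ka*S*Q*X + 12*F^3*Ka*S*Q^3*X^3 - 12*F^3*Ka*Kb*S*X^3 - 6*F^3*Ka^2*Q*X^4 - 6*F^3*Ka^2*Sa*X^3 + 12*F^3*Ka^2*S*Q^2*X^4 + 12*F^3*Ka^2*S*Sa*Q*X^3 - 12*F^3*K - 12*F^3*K*Q^2*X^2 - 6*F^3*K*Sa*Q*X + 24*F^3*K*S*Q + 12*F^3*K*S*Q^3*X^2 + 12*F^3*K*Ka*S*Q^2*X^3 + 12*F^3*K*Ka*S*Sa*Q*X^2 + 6*F^3*K^2*Q*X^2 - 24*F^3*K^2*S - 12*F^4*Q^2 - 12*F^4*Ka*Q*X + 12*F^4*Ka*S*Q^2*X - 12*F^4*Ka^2*X^2 + 12*F^4*Ka^2*S*Q*X^2 + 12*F^4*Ka^3*S*X^3 - 12*F^4*K*Q + 12*F^4*K*S*Q^2 - 12*F^4*K*Ka*S*Q*X + 12*F^4*K^2 - 24*F^4*K^2*S*Q + 12*F^4*K^3*S) * (S*Q - 1)"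
    by algebra
  also have "\<dots> = 0" by (simp add: g1 g2 g3 g4 g5 g6 g7 g8 g9 g10 gq)
  finally show ?thesis by simp
qed


abbreviation "SS \<equiv> Sp (1/2)"
abbreviation "QQ \<equiv> Sp (-1/2)"
definition FF :: "real fps" where "FF = inverse Kf"

lemma fps_deriv_numeral_mult [simp]:
  "fps_deriv (numeral c * f :: real fps) = numeral c * fps_deriv f"
  by (simp add: numeral_fps_const)

lemma fps_deriv_numeral [simp]: "fps_deriv (numeral c :: real fps) = 0"
  by (simp add: numeral_fps_const)

lemma Kf_0: "Kf $ 0 = 1" by (simp add: Kf_def)

lemma two_fps_cancel: "(2::real fps) * a = 2 * b \<Longrightarrow> a = b"
proof -
  assume "(2::real fps) * a = 2 * b"
  then have "fps_const 2 * a = fps_const 2 * b" by (simp add: numeral_fps_const)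
  then have "fps_const (1/2) * (fps_const 2 * a) = fps_const (1/2) * (fps_const 2 * b)" by simp
  then show "a = b" by (simp add: mult.assoc[symmetric])
qed

lemma rel_g1: "SS * SS = 1 + fps_X^2"
  using Sp_mult[of "1/2" "1/2"] Sp_1 by simp

lemma rel_g2: "SS * fps_deriv SS = fps_X"
proof -
  have "fps_deriv (SS * SS) = fps_deriv (1 + fps_X*fps_X :: real fps)" by (simp only: rel_g1 power2_eq_square)
  moreover have "fps_deriv (SS * SS) = 2 * (SS * fps_deriv SS)" by (simp only: fps_deriv_mult fps_deriv_add fps_deriv_numeral_mult fps_deriv_numeral fps_deriv_fps_X fps_deriv_1 fps_deriv_0 power2_eq_square) algebra
  moreover have "fps_deriv (1 + fps_X*fps_X :: real fps) = 2 * fps_X" by (simp only: fps_deriv_mult fps_deriv_add fps_deriv_numeral_mult fps_deriv_numeral fps_deriv_fps_X fps_deriv_1 fps_deriv_0 power2_eq_square) algebra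
  ultimately have "2 * (SS * fps_deriv SS) = 2 * fps_X" by simp
  then show ?thesis by (rule two_fps_cancel)
qed

lemma rel_g3: "fps_deriv SS * fps_deriv SS + SS * fps_deriv (fps_deriv SS) = 1"
proof -
  have "fps_deriv (SS * fps_deriv SS) = fps_deriv (fps_X :: real fps)" by (simp only: rel_g2)
  moreover have "fps_deriv (SS * fps_deriv SS) = fps_deriv SS * fps_deriv SS + SS * fps_deriv (fps_deriv SS)"
    by (simp only: fps_deriv_mult fps_deriv_add fps_deriv_numeral_mult fps_deriv_numeral fps_deriv_fps_X fps_deriv_1 fps_deriv_0 power2_eq_square) algebra
  ultimately show ?thesis by simp
qed

lemma rel_gq: "SS * QQ = 1"
  using Sp_mult[of "1/2" "-1/2"] Sp_0 by simp

lemma rel_g4: "SS * (Kf + fps_X * fps_deriv Kf) = 1"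
  using rel_gq Kf_rel by simp

lemma rel_g5: "fps_deriv SS * (Kf + fps_X * fps_deriv Kf) + SS * (2 * fps_deriv Kf + fps_X * fps_deriv (fps_deriv Kf)) = 0"
proof -
  have "fps_deriv (SS * (Kf + fps_X * fps_deriv Kf)) = fps_deriv 1" by (simp only: rel_g4)
  moreover have "fps_deriv (SS * (Kf + fps_X * fps_deriv Kf)) = fps_deriv SS * (Kf + fps_X * fps_deriv Kf) + SS * (2 * fps_deriv Kf + fps_X * fps_deriv (fps_deriv Kf))"
    by (simp only: fps_deriv_mult fps_deriv_add fps_deriv_numeral_mult fps_deriv_numeral fps_deriv_fps_X fps_deriv_1 fps_deriv_0 power2_eq_square) algebra
  ultimately show ?thesis by simp
qed

lemma rel_g6: "fps_deriv (fps_deriv SS) * (Kf + fps_X * fps_deriv Kf) + 2 * fps_deriv SS * (2 * fps_deriv Kf + fps_X * fps_deriv (fps_deriv Kf))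
   + SS * (3 * fps_deriv (fps_deriv Kf) + fps_X * fps_deriv (fps_deriv (fps_deriv Kf))) = 0"
proof -
  have "fps_deriv (fps_deriv SS * (Kf + fps_X * fps_deriv Kf) + SS * (2 * fps_deriv Kf + fps_X * fps_deriv (fps_deriv Kf))) = fps_deriv 0"
    by (simp only: rel_g5)
  moreover have "fps_deriv (fps_deriv SS * (Kf + fps_X * fps_deriv Kf) + SS * (2 * fps_deriv Kf + fps_X * fps_deriv (fps_deriv Kf))) =
     fps_deriv (fps_deriv SS) * (Kf + fps_X * fps_deriv Kf) + 2 * fps_deriv SS * (2 * fps_deriv Kf + fps_X * fps_deriv (fps_deriv Kf))
   + SS * (3 * fps_deriv (fps_deriv Kf) + fps_X * fps_deriv (fps_deriv (fps_deriv Kf)))"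
    by (simp only: fps_deriv_mult fps_deriv_add fps_deriv_numeral_mult fps_deriv_numeral fps_deriv_fps_X fps_deriv_1 fps_deriv_0 power2_eq_square) algebra
  ultimately show ?thesis by simp
qed

lemma rel_g7: "FF * Kf = 1"
  using Kf_0 unfolding FF_def by (intro inverse_mult_eq_1) simp

lemma rel_g8: "fps_deriv FF * Kf + FF * fps_deriv Kf = 0"
proof -
  have "fps_deriv (FF * Kf) = fps_deriv 1" by (simp only: rel_g7)
  moreover have "fps_deriv (FF * Kf) = fps_deriv FF * Kf + FF * fps_deriv Kf" by (simp only: fps_deriv_mult fps_deriv_add fps_deriv_numeral_mult fps_deriv_numeral fps_deriv_fps_X fps_deriv_1 fps_deriv_0 power2_eq_square) algebra
  ultimately show ?thesis by simp
qed

lemma rel_g9: "fps_deriv (fps_deriv FF) * Kf + 2 * fps_deriv FF * fps_deriv Kf + FF * fps_deriv (fps_deriv Kf) = 0"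
proof -
  have "fps_deriv (fps_deriv FF * Kf + FF * fps_deriv Kf) = fps_deriv 0" by (simp only: rel_g8)
  moreover have "fps_deriv (fps_deriv FF * Kf + FF * fps_deriv Kf) = fps_deriv (fps_deriv FF) * Kf + 2 * fps_deriv FF * fps_deriv Kf + FF * fps_deriv (fps_deriv Kf)"
    by (simp only: fps_deriv_mult fps_deriv_add fps_deriv_numeral_mult fps_deriv_numeral fps_deriv_fps_X fps_deriv_1 fps_deriv_0 power2_eq_square) algebra
  ultimately show ?thesis by simp
qed

lemma rel_g10: "fps_deriv (fps_deriv (fps_deriv FF)) * Kf + 3 * fps_deriv (fps_deriv FF) * fps_deriv Kf
   + 3 * fps_deriv FF * fps_deriv (fps_deriv Kf) + FF * fps_deriv (fps_deriv (fps_deriv Kf)) = 0"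
proof -
  have "fps_deriv (fps_deriv (fps_deriv FF) * Kf + 2 * fps_deriv FF * fps_deriv Kf + FF * fps_deriv (fps_deriv Kf)) = fps_deriv 0"
    by (simp only: rel_g9)
  moreover have "fps_deriv (fps_deriv (fps_deriv FF) * Kf + 2 * fps_deriv FF * fps_deriv Kf + FF * fps_deriv (fps_deriv Kf)) =
    fps_deriv (fps_deriv (fps_deriv FF)) * Kf + 3 * fps_deriv (fps_deriv FF) * fps_deriv Kf
   + 3 * fps_deriv FF * fps_deriv (fps_deriv Kf) + FF * fps_deriv (fps_deriv (fps_deriv Kf))"
    by (simp only: fps_deriv_mult fps_deriv_add fps_deriv_numeral_mult fps_deriv_numeral fps_deriv_fps_X fps_deriv_1 fps_deriv_0 power2_eq_square) algebra
  ultimately show ?thesis by simp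
qed

lemma main_fps_identity:
  "6*fps_X^2*FF*fps_deriv (fps_deriv FF) = - (3*(fps_X*fps_deriv SS + fps_X^2*fps_deriv (fps_deriv SS))*(fps_X*fps_deriv FF - FF)
     + fps_X*fps_deriv SS*(3*fps_X^2*fps_deriv (fps_deriv FF) - 4*fps_X*fps_deriv FF + 4*FF)
     + 2*SS*fps_X^3*fps_deriv (fps_deriv (fps_deriv FF)))"
proof (rule alg_identity[where F=FF and Fa="fps_deriv FF" and Fb="fps_deriv (fps_deriv FF)" and Fc="fps_deriv (fps_deriv (fps_deriv FF))" and K=Kf and Ka="fps_deriv Kf" and Kb="fps_deriv (fps_deriv Kf)" and Kc="fps_deriv (fps_deriv (fps_deriv Kf))" and S=SS and Sa="fps_deriv SS" and Sb="fps_deriv (fps_deriv SS)" and Q=QQ and X=fps_X])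
  show "SS * SS - 1 - fps_X^2 = 0" using rel_g1 by simp
  show "SS * fps_deriv SS - fps_X = 0" using rel_g2 by simp
  show "fps_deriv SS * fps_deriv SS + SS * fps_deriv (fps_deriv SS) - 1 = 0" using rel_g3 by simp
  show "SS * (Kf + fps_X * fps_deriv Kf) - 1 = 0" using rel_g4 by simp
  show "fps_deriv SS * (Kf + fps_X * fps_deriv Kf) + SS * (2 * fps_deriv Kf + fps_X * fps_deriv (fps_deriv Kf)) = 0" by (rule rel_g5)
  show "fps_deriv (fps_deriv SS) * (Kf + fps_X * fps_deriv Kf) + 2 * fps_deriv SS * (2 * fps_deriv Kf + fps_X * fps_deriv (fps_deriv Kf))
   + SS * (3 * fps_deriv (fps_deriv Kf) + fps_X * fps_deriv (fps_deriv (fps_deriv Kf))) = 0" by (rule rel_g6)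
  show "FF * Kf - 1 = 0" using rel_g7 by simp
  show "fps_deriv FF * Kf + FF * fps_deriv Kf = 0" by (rule rel_g8)
  show "fps_deriv (fps_deriv FF) * Kf + 2 * fps_deriv FF * fps_deriv Kf + FF * fps_deriv (fps_deriv Kf) = 0" by (rule rel_g9)
  show "fps_deriv (fps_deriv (fps_deriv FF)) * Kf + 3 * fps_deriv (fps_deriv FF) * fps_deriv Kf
   + 3 * fps_deriv FF * fps_deriv (fps_deriv Kf) + FF * fps_deriv (fps_deriv (fps_deriv Kf)) = 0" by (rule rel_g10)
  show "SS * QQ - 1 = 0" using rel_gq by simp
qed



lemma fps_nth_conv_deriv_real:
  fixes f :: "real fps"
  assumes "fps_conv_radius f > 0"
  shows   "fps_nth f n = (deriv ^^ n) (eval_fps f) 0 / fact n"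
  using assms
proof (induction n arbitrary: f)
  case 0
  thus ?case by (simp add: eval_fps_def)
next
  case (Suc n f)
  have "(deriv ^^ Suc n) (eval_fps f) 0 = (deriv ^^ n) (deriv (eval_fps f)) 0"
    unfolding funpow_Suc_right o_def ..
  also have "eventually (\<lambda>z::real. z \<in> eball 0 (fps_conv_radius f)) (nhds 0)"
    using Suc.prems by (intro eventually_nhds_in_open) (auto simp: zero_ereal_def)
  hence "eventually (\<lambda>z. deriv (eval_fps f) z = eval_fps (fps_deriv f) z) (nhds 0)"
    by eventually_elim (simp add: eval_fps_deriv)
  hence "(deriv ^^ n) (deriv (eval_fps f)) 0 = (deriv ^^ n) (eval_fps (fps_deriv f)) 0"
    by (intro higher_deriv_cong_ev refl)
  also have "\<dots> / fact n = fps_nth (fps_deriv f) n"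
    using Suc.prems fps_conv_radius_deriv[of f]
    by (intro Suc.IH [symmetric]) auto
  also have "\<dots> / of_nat (Suc n) = fps_nth f (Suc n)"
    by (simp add: fps_deriv_def del: of_nat_Suc)
  finally show ?case by (simp add: field_split_simps)
qed

lemma fps_nth_fps_expansion_real:
  fixes f :: "real \<Rightarrow> real"
  assumes "f has_fps_expansion F"
  shows   "fps_nth F n = (deriv ^^ n) f 0 / fact n"
proof -
  have "fps_nth F n = (deriv ^^ n) (eval_fps F) 0 / fact n"
    using assms by (intro fps_nth_conv_deriv_real) (auto simp: has_fps_expansion_def)
  also have "(deriv ^^ n) (eval_fps F) 0 = (deriv ^^ n) f 0"
    using assms by (intro higher_deriv_cong_ev) (auto simp: has_fps_expansion_def)
  finally show ?thesis .
qed

lemma gchoose_half_bound: "\<bar>(-1/2::real) gchoose k\<bar> \<le> 1"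
proof (induction k)
  case 0 then show ?case by simp
next
  case (Suc k)
  have "of_nat (Suc k) * ((-1/2::real) gchoose Suc k) = (-1/2 - of_nat k) * ((-1/2) gchoose k)"
    using gbinomial_mult_1[of "-1/2::real" k] by (simp add: algebra_simps)
  then have "real (Suc k) * \<bar>(-1/2::real) gchoose Suc k\<bar> = \<bar>-1/2 - real k\<bar> * \<bar>(-1/2) gchoose k\<bar>"
    by (metis abs_mult abs_of_nat)
  also have "\<dots> \<le> real (Suc k) * 1"
    using Suc by (intro mult_mono) auto
  finally show ?case by simp
qed

lemma Kf_nth_bound: "\<bar>Kf $ m\<bar> \<le> 1"
proof -
  have "\<bar>((-1/2::real) gchoose (m div 2)) / of_nat (m+1)\<bar> \<le> 1"
    using gchoose_half_bound[of "m div 2"]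
    by (simp add: abs_divide divide_le_eq_1)
  then show ?thesis by (simp add: Kf_def)
qed

lemma Kf_radius: "fps_conv_radius Kf \<ge> ereal (1/2)"
proof -
  have "summable (\<lambda>n. Kf $ n * (1/2::real) ^ n)"
  proof (rule summable_comparison_test')
    show "summable (\<lambda>n. (1/2::real) ^ n)" by (rule summable_geometric) simp
    fix n
    show "norm (Kf $ n * (1/2::real) ^ n) \<le> (1/2) ^ n"
      using Kf_nth_bound[of n] by (simp add: abs_mult mult_left_le_one_le)
  qed
  from conv_radius_geI[OF this] show ?thesis by (simp add: fps_conv_radius_def)
qed

lemma Sp_sums:
  fixes t :: real
  assumes "\<bar>t\<bar> < 1"
  shows "(\<lambda>m. Sp a $ m * t ^ m) sums ((1 + t^2) powr a)"
proof -
  have "\<bar>t^2\<bar> < 1" using assms by (simp add: abs_square_less_1)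
  from gen_binomial_real[OF this, of a]
  have "(\<lambda>n. (a gchoose n) * (t^2)^n) sums (1 + t^2) powr a" .
  moreover have "(\<lambda>n. Sp a $ (2*n) * t ^ (2*n)) = (\<lambda>n. (a gchoose n) * (t^2)^n)"
    by (simp add: Sp_nth power_mult)
  ultimately have "(\<lambda>n. Sp a $ (2*n) * t ^ (2*n)) sums (1 + t^2) powr a" by simp
  moreover have "strict_mono (\<lambda>n::nat. 2*n)" by (auto simp: strict_mono_def)
  moreover have "Sp a $ n * t ^ n = 0" if "n \<notin> range (\<lambda>n::nat. 2*n)" for n
  proof -
    have "odd n" using that by (auto elim!: evenE)
    then show ?thesis by (simp add: Sp_nth)
  qed
  ultimately show ?thesis
    using sums_mono_reindex[of "\<lambda>n::nat. 2*n" "\<lambda>m. Sp a $ m * t ^ m"] by blast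
qed

lemma eval_Sp: "\<bar>t\<bar> < 1 \<Longrightarrow> eval_fps (Sp a) t = (1 + t^2) powr a"
  unfolding eval_fps_def using Sp_sums by (simp add: sums_iff)

lemma radius_XKf: "fps_conv_radius (fps_X * Kf) \<ge> ereal (1/2)"
  using fps_conv_radius_mult[of fps_X Kf] Kf_radius by (auto simp: min_def split: if_splits)

lemma eval_XKf:
  fixes t :: real
  assumes "\<bar>t\<bar> < 1/2"
  shows "eval_fps (fps_X * Kf) t = arsinh t"
proof -
  define h where "h x = eval_fps (fps_X * Kf) x - arsinh x" for x :: real
  have "\<exists>c. \<forall>x\<in>ball 0 (1/2). h x = c"
  proof (rule has_field_derivative_zero_constant)
    show "convex (ball (0::real) (1/2))" by simp
    fix x :: real assume x: "x \<in> ball 0 (1/2)"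
    then have xa: "\<bar>x\<bar> < 1/2" by simp
    have r: "ereal (norm x) < fps_conv_radius (fps_X * Kf)"
    proof -
      have "ereal (norm x) < ereal (1/2)" using xa by simp
      then show ?thesis using radius_XKf by (rule less_le_trans)
    qed
    have d: "fps_deriv (fps_X * Kf) = Sp (-1/2)"
      using Kf_rel by (simp add: add.commute)
    have e1: "(-1/2::real) = - (1/2)" by simp
    have "eval_fps (Sp (-1/2)) x = (1 + x^2) powr (-1/2)"
      using xa by (intro eval_Sp) simp
    also have "\<dots> = inverse ((1 + x^2) powr (1/2))" unfolding e1 by (rule powr_minus)
    also have "(1 + x^2) powr (1/2) = sqrt (x^2 + 1)"
      using powr_half_sqrt[of "1 + x^2"] by (simp add: add.commute)
    finally have ev: "eval_fps (Sp (-1/2)) x = 1 / sqrt (x^2 + 1)" by (simp only: inverse_eq_divide)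
    have d1: "(eval_fps (fps_X * Kf) has_field_derivative 1 / sqrt (x^2 + 1)) (at x within ball 0 (1/2))"
      using has_field_derivative_eval_fps[OF r, of "ball 0 (1/2)"] unfolding d ev .
    have d2: "(arsinh has_field_derivative 1 / sqrt (x^2 + 1)) (at x within ball 0 (1/2))"
      by (rule arsinh_real_has_field_derivative)
    have "((\<lambda>x. eval_fps (fps_X * Kf) x - arsinh x) has_field_derivative 1 / sqrt (x^2 + 1) - 1 / sqrt (x^2 + 1)) (at x within ball 0 (1/2))"
      by (rule DERIV_diff[OF d1 d2])
    then show "(h has_field_derivative 0) (at x within ball 0 (1/2))"
      unfolding h_def[abs_def] by simp
  qed
  then obtain c where c: "\<forall>x\<in>ball 0 (1/2). h x = c" by blast
  have "h 0 = 0" by (simp add: h_def eval_fps_at_0)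
  with c have "c = 0" by simp
  with c assms show ?thesis by (simp add: h_def)
qed



lemma half_gchoose_formula:
  "((1/2::real) gchoose Suc j) = (-1)^j * oddprod j / (2^(Suc j) * fact (Suc j))"
proof (induction j)
  case 0 then show ?case by (simp add: oddprod_def)
next
  case (Suc j)
  have r: "of_nat (Suc (Suc j)) * ((1/2::real) gchoose Suc (Suc j)) = (1/2 - of_nat (Suc j)) * ((1/2) gchoose Suc j)"
    using gbinomial_mult_1[of "1/2::real" "Suc j"] by (simp add: algebra_simps)
  have op: "oddprod (Suc j) = oddprod j * (2 * real (Suc j) - 1)"
    by (simp add: oddprod_def)
  have "((1/2::real) gchoose Suc (Suc j)) = (1/2 - of_nat (Suc j)) * ((1/2) gchoose Suc j) / of_nat (Suc (Suc j))"
    using r by (simp add: field_simps del: of_nat_Suc)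
  also have "\<dots> = (-1)^(Suc j) * oddprod (Suc j) / (2^(Suc (Suc j)) * fact (Suc (Suc j)))"
    unfolding Suc op by (simp add: field_simps del: of_nat_Suc)
  finally show ?case .
qed

lemma beta_formula:
  fixes k :: nat
  shows "(-1) powi (int k - 2) * dfact (2 * int k - 3) / (2 powi (int k - 1) * fact k)
       = -2 * ((1/2::real) gchoose k)"
proof (cases k)
  case 0
  have "dfact (-3) = -1" by (simp add: dfact_def oddprod_def)
  moreover have "(-1::real) powi (-2) = 1" by (simp add: power_int_minus)
  moreover have "(2::real) powi (-1) = 1/2" by (simp add: power_int_minus)
  ultimately show ?thesis using 0 by simp
next
  case (Suc j)
  have e1: "(-1::real) powi (int k - 2) = (-1)^k"
  proof -
    have "(-1::real) powi (int k - 2) = (-1) powi (int k) * (-1) powi (-2)"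
      using power_int_add[of "-1::real" "int k" "-2"] by simp
    then show ?thesis by (simp add: power_int_minus)
  qed
  have e2: "(2::real) powi (int k - 1) = 2^k / 2"
    using power_int_diff[of "2::real" "int k" 1] by simp
  have e3: "dfact (2 * int k - 3) = oddprod j"
  proof -
    have "2 * int k - 3 \<ge> -1" using Suc by simp
    moreover have "nat ((2 * int k - 3 + 1) div 2) = j" using Suc by simp
    ultimately show ?thesis by (simp add: dfact_def)
  qed
  show ?thesis
  proof -
    have f: "fact k \<noteq> (0::real)" by simp
    have "((1/2::real) gchoose k) = (-1)^j * oddprod j / (2^k * fact k)"
      using half_gchoose_formula[of j] Suc by simp
    moreover have "(-1::real)^k = - ((-1)^j)" using Suc by simp
    ultimately show ?thesis unfolding e1 e2 e3 using f
      by (simp add: field_simps)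
  qed
qed



lemma Kf_radius_pos: "fps_conv_radius Kf > 0"
proof -
  have "(0::ereal) < ereal (1/2)" by simp
  then show ?thesis using Kf_radius by (rule less_le_trans)
qed

lemma expansion_FF: "t_over_arsinh has_fps_expansion FF"
proof -
  have e1: "(\<lambda>x. inverse (eval_fps Kf x)) has_fps_expansion inverse Kf"
    by (rule has_fps_expansion_inverse[OF eval_fps_has_fps_expansion[OF Kf_radius_pos]]) (simp add: Kf_0)
  then have rad: "fps_conv_radius FF > 0"
    and ev: "eventually (\<lambda>z. eval_fps FF z = inverse (eval_fps Kf z)) (nhds 0)"
    unfolding has_fps_expansion_def FF_def by auto
  have ev2: "eventually (\<lambda>z::real. z \<in> ball 0 (1/2)) (nhds 0)"
    by (intro eventually_nhds_in_open) auto
  have key: "inverse (eval_fps Kf z) = t_over_arsinh z" if z: "z \<in> ball 0 (1/2)" for z :: real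
  proof (cases "z = 0")
    case True
    then show ?thesis by (simp add: eval_fps_at_0 Kf_0 t_over_arsinh_def)
  next
    case False
    have za: "\<bar>z\<bar> < 1/2" using z by simp
    have r1: "ereal (norm z) < fps_conv_radius Kf"
    proof -
      have "ereal (norm z) < ereal (1/2)" using za by simp
      then show ?thesis using Kf_radius by (rule less_le_trans)
    qed
    have "arsinh z = eval_fps (fps_X * Kf) z" using eval_XKf[OF za] by simp
    also have "\<dots> = z * eval_fps Kf z"
      using r1 by (subst eval_fps_mult) auto
    finally have "eval_fps Kf z = arsinh z / z" using False by (simp add: field_simps)
    then show ?thesis using False by (simp add: t_over_arsinh_def)
  qed
  have "eventually (\<lambda>z. eval_fps FF z = t_over_arsinh z) (nhds 0)"
    using ev ev2 by eventually_elim (simp add: key)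
  with rad show ?thesis unfolding has_fps_expansion_def by simp
qed

lemma cauchyC2_FF: "cauchyC2 k = fact (2*k) * FF $ (2*k)"
  using fps_nth_fps_expansion_real[OF expansion_FF, of "2*k"]
  by (simp add: cauchyC2_def)

lemma FF_odd: "odd m \<Longrightarrow> FF $ m = 0"
proof (induction m rule: less_induct)
  case (less m)
  then obtain m' where m: "m = Suc m'" by (cases m) auto
  have "(FF * Kf) $ m = 0" using rel_g7 m by simp
  then have "(\<Sum>i=0..Suc m'. FF $ i * Kf $ (Suc m' - i)) = 0" by (simp add: fps_mult_nth m)
  then have s: "(\<Sum>i=0..m'. FF $ i * Kf $ (Suc m' - i)) + FF $ m * Kf $ 0 = 0"
    by (simp add: m)
  have "(\<Sum>i=0..m'. FF $ i * Kf $ (Suc m' - i)) = 0"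
  proof (rule sum.neutral, rule ballI)
    fix i assume i: "i \<in> {0..m'}"
    show "FF $ i * Kf $ (Suc m' - i) = 0"
    proof (cases "even i")
      case True
      then have "odd (Suc m' - i)" using less.prems m i by auto
      then show ?thesis by (simp add: Kf_def)
    next
      case False
      then have "FF $ i = 0" using less.IH[of i] i m by auto
      then show ?thesis by simp
    qed
  qed
  with s show ?case by (simp add: Kf_0)
qed



lemma numeral_mult_nth: "(numeral c * f :: real fps) $ n = numeral c * f $ n"
  by (simp add: numeral_fps_const)

lemma c1: "(fps_X * fps_deriv G) $ k = of_nat k * (G :: real fps) $ k"
  by (cases k) simp_all

lemma c2: "(fps_X^2 * fps_deriv (fps_deriv G)) $ k = of_nat k * (of_nat k - 1) * (G :: real fps) $ k"
proof (cases "k < 2")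
  case True then have "k = 0 \<or> k = 1" by auto
  then show ?thesis by (auto simp: fps_X_power_mult_nth)
next
  case False then obtain j where k: "k = j + 2" by (metis add.commute le_Suc_ex not_less)
  show ?thesis by (simp only: fps_X_power_mult_nth) (simp add: k algebra_simps)
qed

lemma c3: "(fps_X^3 * fps_deriv (fps_deriv (fps_deriv G))) $ k = of_nat k * (of_nat k - 1) * (of_nat k - 2) * (G :: real fps) $ k"
proof (cases "k < 3")
  case True then have "k = 0 \<or> k = 1 \<or> k = 2" by auto
  then show ?thesis by (auto simp: fps_X_power_mult_nth)
next
  case False then obtain j where k: "k = j + 3" by (metis add.commute le_Suc_ex not_less)
  show ?thesis by (simp only: fps_X_power_mult_nth) (simp add: k algebra_simps numeral_3_eq_3)
qed

definition W :: "nat \<Rightarrow> nat \<Rightarrow> real" where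
  "W m i = 3*(real i - 1)*(real m - real i)^2 + (3*real i*(real i - 1) - 4*real i + 4)*(real m - real i)
     + 2*real i*(real i - 1)*(real i - 2)"

lemma ident2:
  "6 * (fps_X^2 * (FF * fps_deriv (fps_deriv FF))) =
   - (3 * ((fps_X*fps_deriv FF - FF) * (fps_X*fps_deriv SS + fps_X^2*fps_deriv (fps_deriv SS)))
      + (3*(fps_X^2*fps_deriv (fps_deriv FF)) - 4*(fps_X*fps_deriv FF) + 4*FF) * (fps_X*fps_deriv SS)
      + 2 * ((fps_X^3*fps_deriv (fps_deriv (fps_deriv FF))) * SS))"
proof -
  have "6 * (fps_X^2 * (FF * fps_deriv (fps_deriv FF))) = 6*fps_X^2*FF*fps_deriv (fps_deriv FF)" by algebra
  also have "\<dots> = - (3*(fps_X*fps_deriv SS + fps_X^2*fps_deriv (fps_deriv SS))*(fps_X*fps_deriv FF - FF)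
     + fps_X*fps_deriv SS*(3*fps_X^2*fps_deriv (fps_deriv FF) - 4*fps_X*fps_deriv FF + 4*FF)
     + 2*SS*fps_X^3*fps_deriv (fps_deriv (fps_deriv FF)))" by (rule main_fps_identity)
  also have "\<dots> = - (3 * ((fps_X*fps_deriv FF - FF) * (fps_X*fps_deriv SS + fps_X^2*fps_deriv (fps_deriv SS)))
      + (3*(fps_X^2*fps_deriv (fps_deriv FF)) - 4*(fps_X*fps_deriv FF) + 4*FF) * (fps_X*fps_deriv SS)
      + 2 * ((fps_X^3*fps_deriv (fps_deriv (fps_deriv FF))) * SS))" by algebra
  finally show ?thesis .
qed

lemma rhs_nth:
  "(- (3 * ((fps_X*fps_deriv FF - FF) * (fps_X*fps_deriv SS + fps_X^2*fps_deriv (fps_deriv SS)))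
      + (3*(fps_X^2*fps_deriv (fps_deriv FF)) - 4*(fps_X*fps_deriv FF) + 4*FF) * (fps_X*fps_deriv SS)
      + 2 * ((fps_X^3*fps_deriv (fps_deriv (fps_deriv FF))) * SS))) $ m
   = - (\<Sum>i=0..m. W m i * FF $ i * SS $ (m - i))"
proof -
  have cA: "(fps_X*fps_deriv SS + fps_X^2*fps_deriv (fps_deriv SS)) $ k = of_nat k * of_nat k * SS $ k" for k
    by (simp only: fps_add_nth c1 c2) (simp add: algebra_simps)
  have cB: "(fps_X*fps_deriv FF - FF) $ k = (of_nat k - 1) * FF $ k" for k
    by (simp only: fps_sub_nth c1) (simp add: algebra_simps)
  have cC: "(3*(fps_X^2*fps_deriv (fps_deriv FF)) - 4*(fps_X*fps_deriv FF) + 4*FF) $ k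
      = (3 * of_nat k * (of_nat k - 1) - 4 * of_nat k + 4) * FF $ k" for k
    by (simp only: fps_add_nth fps_sub_nth numeral_mult_nth c1 c2) (simp add: algebra_simps)
  have cD: "(fps_X^3*fps_deriv (fps_deriv (fps_deriv FF))) $ k = of_nat k * (of_nat k - 1) * (of_nat k - 2) * FF $ k" for k
    by (rule c3)
  let ?A = "fps_X*fps_deriv SS + fps_X^2*fps_deriv (fps_deriv SS)"
  let ?B = "fps_X*fps_deriv FF - FF"
  let ?C = "3*(fps_X^2*fps_deriv (fps_deriv FF)) - 4*(fps_X*fps_deriv FF) + 4*FF"
  let ?D = "fps_X^3*fps_deriv (fps_deriv (fps_deriv FF))"
  have "(- (3 * (?B * ?A) + ?C * (fps_X*fps_deriv SS) + 2 * (?D * SS))) $ m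
     = - (3 * (\<Sum>i=0..m. ?B $ i * ?A $ (m - i)) + (\<Sum>i=0..m. ?C $ i * (fps_X*fps_deriv SS) $ (m - i))
          + 2 * (\<Sum>i=0..m. ?D $ i * SS $ (m - i)))"
    by (simp only: fps_neg_nth fps_add_nth numeral_mult_nth fps_mult_nth[of ?B] fps_mult_nth[of ?C] fps_mult_nth[of ?D])
  also have "\<dots> = - (\<Sum>i=0..m. 3 * (?B $ i * ?A $ (m - i)) + ?C $ i * (fps_X*fps_deriv SS) $ (m - i) + 2 * (?D $ i * SS $ (m - i)))"
    by (simp only: sum_distrib_left sum.distrib)
  also have "\<dots> = - (\<Sum>i=0..m. W m i * FF $ i * SS $ (m - i))"
  proof -
    have "(\<Sum>i=0..m. 3 * (?B $ i * ?A $ (m - i)) + ?C $ i * (fps_X*fps_deriv SS) $ (m - i) + 2 * (?D $ i * SS $ (m - i)))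
        = (\<Sum>i=0..m. W m i * FF $ i * SS $ (m - i))"
    proof (rule sum.cong[OF refl])
      fix i assume i: "i \<in> {0..m}"
      then have im: "real (m - i) = real m - real i" by (simp add: of_nat_diff)
      show "3 * (?B $ i * ?A $ (m - i)) + ?C $ i * (fps_X*fps_deriv SS) $ (m - i) + 2 * (?D $ i * SS $ (m - i))
          = W m i * FF $ i * SS $ (m - i)"
        unfolding cA cB cC cD c1 im W_def by (simp add: algebra_simps power2_eq_square)
    qed
    then show ?thesis by simp
  qed
  finally show ?thesis .
qed



lemma coeff_identity:
  "6 * (FF * fps_deriv (fps_deriv FF)) $ (2*n)
   = - (\<Sum>l=0..n+1. W (2*(n+1)) (2*l) * FF $ (2*l) * ((1/2) gchoose (n+1-l)))"
proof -
  have "(6 * (fps_X^2 * (FF * fps_deriv (fps_deriv FF)))) $ (2*(n+1)) =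
   (- (3 * ((fps_X*fps_deriv FF - FF) * (fps_X*fps_deriv SS + fps_X^2*fps_deriv (fps_deriv SS)))
      + (3*(fps_X^2*fps_deriv (fps_deriv FF)) - 4*(fps_X*fps_deriv FF) + 4*FF) * (fps_X*fps_deriv SS)
      + 2 * ((fps_X^3*fps_deriv (fps_deriv (fps_deriv FF))) * SS))) $ (2*(n+1))"
    by (simp only: ident2)
  also have "\<dots> = - (\<Sum>i=0..2*(n+1). W (2*(n+1)) i * FF $ i * SS $ (2*(n+1) - i))"
    by (rule rhs_nth)
  also have "(\<Sum>i=0..2*(n+1). W (2*(n+1)) i * FF $ i * SS $ (2*(n+1) - i))
      = (\<Sum>l=0..n+1. W (2*(n+1)) (2*l) * FF $ (2*l) * SS $ (2*(n+1) - 2*l))"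
    by (rule sum_even_reduce) (simp add: FF_odd)
  also have "\<dots> = (\<Sum>l=0..n+1. W (2*(n+1)) (2*l) * FF $ (2*l) * ((1/2) gchoose (n+1-l)))"
  proof (rule sum.cong[OF refl])
    fix l assume "l \<in> {0..n+1}"
    then have "2*(n+1) - 2*l = 2*(n+1-l)" by auto
    then show "W (2*(n+1)) (2*l) * FF $ (2*l) * SS $ (2*(n+1) - 2*l) = W (2*(n+1)) (2*l) * FF $ (2*l) * ((1/2) gchoose (n+1-l))"
      by (simp add: Sp_nth)
  qed
  finally have e: "(6 * (fps_X^2 * (FF * fps_deriv (fps_deriv FF)))) $ (2*(n+1)) = - (\<Sum>l=0..n+1. W (2*(n+1)) (2*l) * FF $ (2*l) * ((1/2) gchoose (n+1-l)))" .
  have "(6 * (fps_X^2 * (FF * fps_deriv (fps_deriv FF)))) $ (2*(n+1)) = 6 * (FF * fps_deriv (fps_deriv FF)) $ (2*n)"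
    by (simp only: numeral_mult_nth fps_X_power_mult_nth) simp
  with e show ?thesis by simp
qed

lemma lhs_stmt:
  "(\<Sum>i\<le>n. fact (2 * n) / (fact (2 * i) * fact (2 * (n - i))) * cauchyC2 i * cauchyC2 (n - i + 1))
   = fact (2*n) * (FF * fps_deriv (fps_deriv FF)) $ (2*n)"
proof -
  have "(FF * fps_deriv (fps_deriv FF)) $ (2*n) = (\<Sum>i=0..2*n. FF $ i * fps_deriv (fps_deriv FF) $ (2*n - i))"
    by (rule fps_mult_nth)
  also have "\<dots> = (\<Sum>i=0..n. FF $ (2*i) * fps_deriv (fps_deriv FF) $ (2*n - 2*i))"
    by (rule sum_even_reduce) (simp add: FF_odd)
  finally have e: "(FF * fps_deriv (fps_deriv FF)) $ (2*n) = (\<Sum>i=0..n. FF $ (2*i) * fps_deriv (fps_deriv FF) $ (2*n - 2*i))" .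
  have "(\<Sum>i\<le>n. fact (2 * n) / (fact (2 * i) * fact (2 * (n - i))) * cauchyC2 i * cauchyC2 (n - i + 1))
     = (\<Sum>i=0..n. fact (2*n) * (FF $ (2*i) * fps_deriv (fps_deriv FF) $ (2*n - 2*i)))"
  proof (rule sum.cong)
    show "{..n} = {0..n}" by auto
  next
    fix i assume "i \<in> {0..n}"
    define j where "j = n - i"
    have j: "n - i = j" "2*n - 2*i = 2*j" "n - i + 1 = Suc j" using \<open>i \<in> {0..n}\<close> by (auto simp: j_def)
    have d: "fps_deriv (fps_deriv FF) $ (2*j) = (2*real j + 1) * (2*real j + 2) * FF $ (2*j + 2)"
      by (simp add: algebra_simps)
    have f: "fact (2 * Suc j) = (2*real j + 2) * (2*real j + 1) * (fact (2*j) :: real)"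
    proof -
      have "2 * Suc j = Suc (Suc (2*j))" by simp
      then show ?thesis by (simp add: algebra_simps)
    qed
    show "fact (2 * n) / (fact (2 * i) * fact (2 * (n - i))) * cauchyC2 i * cauchyC2 (n - i + 1)
        = fact (2*n) * (FF $ (2*i) * fps_deriv (fps_deriv FF) $ (2*n - 2*i))"
      unfolding j cauchyC2_FF d f by (simp add: field_simps)
  qed
  also have "\<dots> = fact (2*n) * (FF * fps_deriv (fps_deriv FF)) $ (2*n)"
    by (simp add: e sum_distrib_left)
  finally show ?thesis .
qed

lemma term_stmt:
  fixes n l :: nat
  assumes l: "l \<le> n + 1"
  shows "((-1) powi (int n - int l - 1) * (2 * real l - 1)
             * (3 * (real n)^2 - 3 * real n * real l + 2 * (real l)^2 + 4 * real n - 3 * real l + 1)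
             * dfact (2 * (int n - int l) - 1))
           / (3 * 2 powi (int n - int l) * fact (n + 1 - l) * fact (2 * l))
           * cauchyC2 l
       = - (W (2*(n+1)) (2*l) * FF $ (2*l) * ((1/2) gchoose (n+1-l))) / 6"
proof -
  define k where "k = n + 1 - l"
  have i1: "int n - int l - 1 = int k - 2" using l by (simp add: k_def)
  have i2: "int n - int l = int k - 1" using l by (simp add: k_def)
  have i3: "2 * (int n - int l) - 1 = 2 * int k - 3" using l by (simp add: k_def)
  have rn: "real n = real k + real l - 1" using l by (simp add: k_def of_nat_diff)
  define Q where "Q = 3 * (real n)^2 - 3 * real n * real l + 2 * (real l)^2 + 4 * real n - 3 * real l + 1"
  have WQ: "W (2*(n+1)) (2*l) = 4 * (2 * real l - 1) * Q"
    unfolding W_def Q_def by (simp add: algebra_simps power2_eq_square)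
  have alg: "\<And>a b d e f g x::real. e \<noteq> 0 \<Longrightarrow> f \<noteq> 0 \<Longrightarrow> g \<noteq> 0 \<Longrightarrow>
      (a * b * Q * d) / (3 * e * f * g) * (g * x) = (a * d / (e * f)) * (b * Q / 3) * x"
    by (simp add: field_simps)
  have "((-1) powi (int n - int l - 1) * (2 * real l - 1) * Q * dfact (2 * (int n - int l) - 1))
           / (3 * 2 powi (int n - int l) * fact (n + 1 - l) * fact (2 * l)) * cauchyC2 l
       = ((-1) powi (int k - 2) * dfact (2 * int k - 3) / (2 powi (int k - 1) * fact k)) * ((2 * real l - 1) * Q / 3) * FF $ (2*l)"
  proof -
    have e1: "int k - 1 - 1 = int k - 2" and e2: "2 * (int k - 1) - 1 = 2 * int k - 3" by simp_all
    show ?thesis unfolding i2 e1 e2 cauchyC2_FF k_def[symmetric] by (rule alg) auto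
  qed
  also have "\<dots> = - (W (2*(n+1)) (2*l) * FF $ (2*l) * ((1/2) gchoose (n+1-l))) / 6"
    unfolding beta_formula WQ k_def[symmetric] by (simp add: field_simps)
  finally show ?thesis unfolding Q_def .
qed

theorem theorem3:
  fixes n :: nat
  shows "(\<Sum>i\<le>n. fact (2 * n) / (fact (2 * i) * fact (2 * (n - i)))
                  * cauchyC2 i * cauchyC2 (n - i + 1))
       = fact (2 * n) * (\<Sum>l = 0..n + 1.
           ((-1) powi (int n - int l - 1) * (2 * real l - 1)
             * (3 * (real n)^2 - 3 * real n * real l + 2 * (real l)^2 + 4 * real n - 3 * real l + 1)
             * dfact (2 * (int n - int l) - 1))
           / (3 * 2 powi (int n - int l) * fact (n + 1 - l) * fact (2 * l))
           * cauchyC2 l)"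
proof -
  have "(\<Sum>l = 0..n + 1.
           ((-1) powi (int n - int l - 1) * (2 * real l - 1)
             * (3 * (real n)^2 - 3 * real n * real l + 2 * (real l)^2 + 4 * real n - 3 * real l + 1)
             * dfact (2 * (int n - int l) - 1))
           / (3 * 2 powi (int n - int l) * fact (n + 1 - l) * fact (2 * l))
           * cauchyC2 l)
      = (\<Sum>l = 0..n + 1. - (W (2*(n+1)) (2*l) * FF $ (2*l) * ((1/2) gchoose (n+1-l))) / 6)"
    by (rule sum.cong[OF refl]) (rule term_stmt, simp)
  also have "\<dots> = (- (\<Sum>l=0..n+1. W (2*(n+1)) (2*l) * FF $ (2*l) * ((1/2) gchoose (n+1-l)))) / 6"
    by (simp only: sum_divide_distrib[symmetric] sum_negf)
  also have "\<dots> = (FF * fps_deriv (fps_deriv FF)) $ (2*n)"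
    using coeff_identity[of n] by simp
  finally show ?thesis using lhs_stmt[of n] by simp
qed


end
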